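(* Let $G$ be a topological group such that $\mathfrak{L}(G)$ carries a structure of real vector space whose scalar multiplication and addition satisfy, for all $t,s\in\mathbb{R}$ and $X_1,X_2\in\mathfrak{L}(G)$, $$(tX_1)(s)=X_1(ts),\qquad (X_1+X_2)(t)=\lim_{n\to\infty}\Big(X_1\big(\tfrac{t}{n}\big)X_2\big(\tfrac{t}{n}\big)\Big)^n,$$ the latter convergence being uniform on every compact subset of $\mathbb{R}$. Then for every Hausdorff locally convex space $\mathcal{Y}$ and every $\phi\in\mathcal{LUC}^1_{\rm loc}(G,\mathcal{Y})$ the map $\mathfrak{L}(G)\to\mathcal{LUC}_{\rm loc}(G,\mathcal{Y})$, $X\mapsto D^\lambda_X\phi$, is linear.
   Context: All topological groups are Hausdorff. $\mathfrak{L}(G)$ is the set of continuous homomorphisms $(\mathbb{R},+)\to G$. For $\phi\colon G\to\mathcal{Y}$, $X\in\mathfrak{L}(G)$, $g\in G$: $(D^\lambda_X\phi)(g)=\lim_{t\to0}\frac{\phi(gX(t))-\phi(g)}{t}$ when it exists. $\mathcal{LUC}_{\rm loc}(G,\mathcal{Y})$ is the set of $\phi\colon G\to\mathcal{Y}$ such that every $g_0\in G$ has a neighborhood $V$ with: for every neighborhood $U$ of $0\in\mathcal{Y}$ there is a neighborhood $W$ of $\mathbf{1}\in G$ such that $x,y\in V$, $x^{-1}y\in W$ imply $\phi(x)-\phi(y)\in U$. $\mathcal{LUC}^1_{\rm loc}(G,\mathcal{Y})$ is the set of $\phi\in\mathcal{LUC}_{\rm loc}(G,\mathcal{Y})$ such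 that $D^\lambda_X\phi(g)$ exists for all $X,g$ and $D^\lambda_X\phi\in\mathcal{LUC}_{\rm loc}(G,\mathcal{Y})$ for every $X\in\mathfrak{L}(G)$. *)

theory Defs
  imports "HOL-Analysis.Analysis"
begin

text \<open>Topological groups are modelled by the type class
  topological_group_add + t2_space (additive notation, NOT assumed commutative):
  the group product g h is written g + h, the unit is 0, the inverse of g is - g.\<close>

class locally_convex_space = real_vector + t2_space +
  assumes lcs_add_cont: "LIM p (nhds a \<times>\<^sub>F nhds b). fst p + snd p :> nhds (a + b)"
  assumes lcs_scale_cont: "LIM p (nhds c \<times>\<^sub>F nhds x). fst p *\<^sub>R snd p :> nhds (c *\<^sub>R x)"
  assumes lcs_convex_nhds:
    "open U \<Longrightarrow> 0 \<in> U \<Longrightarrow> \<exists>V. open V \<and> 0 \<in> V \<and>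
      (\<forall>x\<in>V. \<forall>y\<in>V. \<forall>u v. 0 \<le> u \<and> 0 \<le> v \<and> u + v = 1 \<longrightarrow> u *\<^sub>R x + v *\<^sub>R y \<in> V) \<and> V \<subseteq> U"

definition nhd_of :: "'a::topological_space set \<Rightarrow> 'a \<Rightarrow> bool" where
  "nhd_of S x \<longleftrightarrow> (\<exists>T. open T \<and> x \<in> T \<and> T \<subseteq> S)"

definition one_param_subgroups :: "(real \<Rightarrow> 'g::topological_group_add) set" where
  "one_param_subgroups = {X. continuous_on UNIV X \<and> (\<forall>s t. X (s + t) = X s + X t)}"

definition gpow :: "'g::monoid_add \<Rightarrow> nat \<Rightarrow> 'g" where
  "gpow a n = (((+) a) ^^ n) 0"

definition unif_conv_on_compacts ::
    "(nat \<Rightarrow> real \<Rightarrow> 'g::topological_group_add) \<Rightarrow> (real \<Rightarrow> 'g) \<Rightarrow> bool" where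
  "unif_conv_on_compacts F f \<longleftrightarrow>
     (\<forall>K. compact K \<longrightarrow>
        (\<forall>W. nhd_of W (0::'g) \<longrightarrow>
           (\<forall>\<^sub>F n in sequentially. \<forall>t\<in>K. - f t + F n t \<in> W)))"

definition real_vector_space_on ::
    "'v set \<Rightarrow> ('v \<Rightarrow> 'v \<Rightarrow> 'v) \<Rightarrow> (real \<Rightarrow> 'v \<Rightarrow> 'v) \<Rightarrow> 'v \<Rightarrow> bool" where
  "real_vector_space_on L add scal z \<longleftrightarrow>
     z \<in> L \<and>
     (\<forall>x\<in>L. \<forall>y\<in>L. add x y \<in> L) \<and>
     (\<forall>c. \<forall>x\<in>L. scal c x \<in> L) \<and>
     (\<forall>x\<in>L. \<forall>y\<in>L. \<forall>w\<in>L. add (add x y) w = add x (add y w)) \<and>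
     (\<forall>x\<in>L. \<forall>y\<in>L. add x y = add y x) \<and>
     (\<forall>x\<in>L. add z x = x) \<and>
     (\<forall>x\<in>L. \<exists>y\<in>L. add x y = z) \<and>
     (\<forall>a b. \<forall>x\<in>L. scal a (scal b x) = scal (a * b) x) \<and>
     (\<forall>x\<in>L. scal 1 x = x) \<and>
     (\<forall>a. \<forall>x\<in>L. \<forall>y\<in>L. scal a (add x y) = add (scal a x) (scal a y)) \<and>
     (\<forall>a b. \<forall>x\<in>L. scal (a + b) x = add (scal a x) (scal b x))"

definition has_left_deriv ::
    "('g::topological_group_add \<Rightarrow> 'y::locally_convex_space) \<Rightarrow> (real \<Rightarrow> 'g) \<Rightarrow> 'g \<Rightarrow> 'y \<Rightarrow> bool" where
  "has_left_deriv \<phi> X g d \<longleftrightarrow>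
     ((\<lambda>t. (1 / t) *\<^sub>R (\<phi> (g + X t) - \<phi> g)) \<longlongrightarrow> d) (at 0)"

definition left_deriv ::
    "(real \<Rightarrow> 'g::topological_group_add) \<Rightarrow> ('g \<Rightarrow> 'y::locally_convex_space) \<Rightarrow> 'g \<Rightarrow> 'y" where
  "left_deriv X \<phi> g = Lim (at 0) (\<lambda>t. (1 / t) *\<^sub>R (\<phi> (g + X t) - \<phi> g))"

definition LUC_loc :: "('g::topological_group_add \<Rightarrow> 'y::locally_convex_space) set" where
  "LUC_loc = {\<phi>. \<forall>g0. \<exists>V. nhd_of V g0 \<and>
       (\<forall>U. nhd_of U (0::'y) \<longrightarrow>
          (\<exists>W. nhd_of W (0::'g) \<and>
             (\<forall>x\<in>V. \<forall>y\<in>V. - x + y \<in> W \<longrightarrow> \<phi> x - \<phi> y \<in> U)))}"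

definition LUC1_loc :: "('g::topological_group_add \<Rightarrow> 'y::locally_convex_space) set" where
  "LUC1_loc = {\<phi>. \<phi> \<in> LUC_loc \<and>
       (\<forall>X\<in>one_param_subgroups. \<forall>g. \<exists>d. has_left_deriv \<phi> X g d) \<and>
       (\<forall>X\<in>one_param_subgroups. left_deriv X \<phi> \<in> LUC_loc)}"

end

theory Submission
  imports Defs
begin

lemma tendsto_scaleR_lcs:
  fixes f :: "_ \<Rightarrow> 'y::locally_convex_space"
  assumes "(c \<longlongrightarrow> c0) F" "(f \<longlongrightarrow> a) F"
  shows "((\<lambda>x. c x *\<^sub>R f x) \<longlongrightarrow> c0 *\<^sub>R a) F"
proof -
  have "((\<lambda>x. (c x, f x)) \<longlongrightarrow> (c0, a)) F"
    by (rule tendsto_Pair) (use assms in auto)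
  then have 1: "filterlim (\<lambda>x. (c x, f x)) (nhds c0 \<times>\<^sub>F nhds a) F"
    by (simp add: nhds_prod)
  have "filterlim (\<lambda>x. fst (c x, f x) *\<^sub>R snd (c x, f x)) (nhds (c0 *\<^sub>R a)) F"
    by (rule filterlim_compose[OF lcs_scale_cont 1])
  then show ?thesis by simp
qed
lemma lcs_uminus: "(uminus \<longlongrightarrow> - a) (nhds (a::'y::locally_convex_space))"
proof -
  have "((\<lambda>x. (-1::real) *\<^sub>R x) \<longlongrightarrow> (-1) *\<^sub>R a) (nhds a)"
    by (rule tendsto_scaleR_lcs) (auto intro: filterlim_ident)
  moreover have "(\<lambda>x. (-1::real) *\<^sub>R x) = (uminus :: 'y \<Rightarrow> 'y)" by (rule ext) simp
  ultimately show ?thesis by simp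
qed
instance locally_convex_space \<subseteq> topological_ab_group_add
  by standard (auto intro: lcs_add_cont lcs_uminus)
lemma "((\<lambda>x. f x - g x) \<longlongrightarrow> a - b) F \<or> \<not> ((f \<longlongrightarrow> (a::'y::locally_convex_space)) F \<and> (g \<longlongrightarrow> b) F)"
  by (auto intro: tendsto_diff)


lemma gauge_exists:
  fixes U :: "'y::locally_convex_space set"
  assumes U: "open U" "0 \<in> U"
  obtains p :: "'y \<Rightarrow> real" where "\<forall>x. 0 \<le> p x" "\<forall>x y. p (x+y) \<le> p x + p y"
    "\<forall>c x. p (c *\<^sub>R x) = \<bar>c\<bar> * p x"
    "\<forall>x. isCont p x"
    "\<forall>x. p x < 1 \<longrightarrow> x \<in> U"
proof -
  obtain V where V: "open V" "0 \<in> V" "V \<subseteq> U"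
    and Vc: "\<forall>x\<in>V. \<forall>y\<in>V. \<forall>u v. 0 \<le> u \<and> 0 \<le> v \<and> u + v = 1 \<longrightarrow> u *\<^sub>R x + v *\<^sub>R y \<in> V"
    using lcs_convex_nhds[OF U] by blast
  define B where "B = V \<inter> uminus -` V"
  have Bopen: "open B" unfolding B_def
    by (intro open_Int V open_vimage) (auto intro: continuous_intros)
  have B0: "0 \<in> B" using V by (simp add: B_def)
  have Bsym: "x \<in> B \<Longrightarrow> - x \<in> B" for x by (auto simp: B_def)
  have Bc: "x \<in> B \<Longrightarrow> y \<in> B \<Longrightarrow> 0 \<le> u \<Longrightarrow> 0 \<le> v \<Longrightarrow> u + v = 1 \<Longrightarrow> u *\<^sub>R x + v *\<^sub>R y \<in> B" for x y u v
    using Vc[rule_format, of x y u v] Vc[rule_format, of "-x" "-y" u v] by (auto simp: B_def)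
  have Bbal: "x \<in> B \<Longrightarrow> \<bar>c\<bar> \<le> 1 \<Longrightarrow> c *\<^sub>R x \<in> B" for x c
  proof (cases "c \<ge> 0")
    case True
    assume "x \<in> B" "\<bar>c\<bar> \<le> 1"
    then show ?thesis using Bc[of x 0 c "1-c"] B0 True by auto
  next
    case False
    assume "x \<in> B" "\<bar>c\<bar> \<le> 1"
    then show ?thesis using Bc[of "-x" 0 "-c" "1+c"] B0 False Bsym by auto
  qed
  define S where "S x = {t::real. 0 < t \<and> inverse t *\<^sub>R x \<in> B}" for x
  define p where "p x = Inf (S x)" for x
  have Sup: "t \<in> S x \<Longrightarrow> t \<le> t' \<Longrightarrow> t' \<in> S x" for t t' x
  proof -
    assume t: "t \<in> S x" "t \<le> t'"
    then have "(t / t') *\<^sub>R (inverse t *\<^sub>R x) \<in> B"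
      using Bbal[of "inverse t *\<^sub>R x" "t/t'"] by (auto simp: S_def)
    moreover have "(t / t') *\<^sub>R (inverse t *\<^sub>R x) = inverse t' *\<^sub>R x" using t by (auto simp: S_def field_simps)
    ultimately show ?thesis using t by (auto simp: S_def)
  qed
  have Sne: "S x \<noteq> {}" for x
  proof -
    have "((\<lambda>r. r *\<^sub>R x) \<longlongrightarrow> 0 *\<^sub>R x) (at_right 0)"
      by (intro tendsto_scaleR_lcs tendsto_intros)
    then have "eventually (\<lambda>r. r *\<^sub>R x \<in> B) (at_right 0)"
      using Bopen B0 by (auto dest: topological_tendstoD)
    moreover have "eventually (\<lambda>r::real. r > 0) (at_right 0)" by (simp add: eventually_at_right_less)
    ultimately have "eventually (\<lambda>r. r > 0 \<and> r *\<^sub>R x \<in> B) (at_right (0::real))" by eventually_elim auto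
    then have "\<exists>r. r > 0 \<and> r *\<^sub>R x \<in> B" using eventually_happens trivial_limit_at_right_real by blast
    then obtain r where "r > 0" "r *\<^sub>R x \<in> B" by blast
    then have "inverse r \<in> S x" by (auto simp: S_def)
    then show ?thesis by auto
  qed
  have Sbdd: "bdd_below (S x)" for x by (auto simp: S_def bdd_below_def intro!: exI[of _ 0])
  have p0: "0 \<le> p x" for x unfolding p_def by (rule cInf_greatest[OF Sne]) (auto simp: S_def)
  have plow: "t \<in> S x \<Longrightarrow> p x \<le> t" for t x unfolding p_def by (rule cInf_lower[OF _ Sbdd])
  have pB: "p x < 1 \<Longrightarrow> x \<in> B" for x
  proof -
    assume "p x < 1"
    then obtain t where t: "t \<in> S x" "t < 1" using cInf_lessD[OF Sne] unfolding p_def by blast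
    then have "t *\<^sub>R (inverse t *\<^sub>R x) \<in> B" using Bbal[of "inverse t *\<^sub>R x" t] by (auto simp: S_def)
    then show "x \<in> B" using t by (auto simp: S_def)
  qed
  have Bp: "x \<in> B \<Longrightarrow> p x \<le> 1" for x by (rule plow) (auto simp: S_def)
  have padd: "p (x + y) \<le> p x + p y" for x y
  proof -
    have "p (x + y) \<le> t + u" if "t \<in> S x" "u \<in> S y" for t u
    proof (rule plow)
      from that have tu: "t > 0" "u > 0" "inverse t *\<^sub>R x \<in> B" "inverse u *\<^sub>R y \<in> B" by (auto simp: S_def)
      have "(t/(t+u)) *\<^sub>R (inverse t *\<^sub>R x) + (u/(t+u)) *\<^sub>R (inverse u *\<^sub>R y) \<in> B"
        using tu by (intro Bc) (simp_all add: add_divide_distrib[symmetric])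
      moreover have "(t/(t+u)) *\<^sub>R (inverse t *\<^sub>R x) + (u/(t+u)) *\<^sub>R (inverse u *\<^sub>R y) = inverse (t+u) *\<^sub>R (x + y)"
      proof -
        have "t * inverse (t+u) * inverse t = inverse (t+u)" "u * inverse (t+u) * inverse u = inverse (t+u)"
          using tu by (simp_all add: field_simps)
        then show ?thesis by (simp only: scaleR_add_right scaleR_scaleR divide_inverse)
      qed
      ultimately show "t + u \<in> S (x + y)" using tu by (auto simp: S_def)
    qed
    then have "p (x + y) - u \<le> p x" if "u \<in> S y" for u
      unfolding p_def[of x] using that by (intro cInf_greatest[OF Sne]) (auto simp: p_def diff_le_eq)
    then have "p (x + y) - p x \<le> p y" unfolding p_def[of y]
      by (intro cInf_greatest[OF Sne]) (auto simp: p_def diff_le_eq le_diff_eq add.commute)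
    then show ?thesis by simp
  qed
  have pscale_le: "p (c *\<^sub>R x) \<le> \<bar>c\<bar> * p x" for c x
  proof (cases "c = 0")
    case True
    have "p 0 \<le> e" if "e > 0" for e by (rule plow) (use that B0 in \<open>auto simp: S_def\<close>)
    then have "p 0 \<le> 0" by (metis dense not_le)
    then show ?thesis using True by simp
  next
    case False
    have "p (c *\<^sub>R x) \<le> \<bar>c\<bar> * t" if "t \<in> S x" for t
    proof (rule plow)
      from that have t: "t > 0" "inverse t *\<^sub>R x \<in> B" by (auto simp: S_def)
      have "sgn c *\<^sub>R (inverse t *\<^sub>R x) \<in> B" using t Bbal[of "inverse t *\<^sub>R x" "sgn c"] by (auto simp: sgn_if)
      moreover have "sgn c *\<^sub>R (inverse t *\<^sub>R x) = inverse (\<bar>c\<bar> * t) *\<^sub>R (c *\<^sub>R x)"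
        using False t by (auto simp: sgn_if)
      ultimately show "\<bar>c\<bar> * t \<in> S (c *\<^sub>R x)" using t False by (auto simp: S_def mult_ac)
    qed
    then have "p (c *\<^sub>R x) / \<bar>c\<bar> \<le> t" if "t \<in> S x" for t
      using that False by (auto simp: field_simps)
    then have "p (c *\<^sub>R x) / \<bar>c\<bar> \<le> p x" unfolding p_def[of x]
      by (intro cInf_greatest[OF Sne]) (auto simp: p_def)
    then show ?thesis using False by (auto simp: field_simps)
  qed
  have pscale: "p (c *\<^sub>R x) = \<bar>c\<bar> * p x" for c x
  proof (cases "c = 0")
    case True then show ?thesis using pscale_le[of 0 x] p0[of 0] by simp
  next
    case False
    have "p x = p (inverse c *\<^sub>R (c *\<^sub>R x))" using False by simp
    also have "\<dots> \<le> \<bar>inverse c\<bar> * p (c *\<^sub>R x)" by (rule pscale_le)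
    finally have "\<bar>c\<bar> * p x \<le> p (c *\<^sub>R x)" using False by (simp add: field_simps abs_inverse)
    then show ?thesis using pscale_le[of c x] by simp
  qed
  have pdiff: "\<bar>p x - p y\<bar> \<le> p (x - y)" for x y
  proof -
    have "p x \<le> p (x - y) + p y" using padd[of "x - y" y] by simp
    moreover have "p y \<le> p (y - x) + p x" using padd[of "y - x" x] by simp
    moreover have "p (y - x) = p (x - y)" using pscale[of "-1" "x - y"] by simp
    ultimately show ?thesis by linarith
  qed
  have pcont: "((\<lambda>x. p (f x)) \<longlongrightarrow> p a) F" if f: "(f \<longlongrightarrow> a) F" for F f a
  proof (rule tendstoI)
    fix e :: real assume e: "e > 0"
    have "((\<lambda>x. (2 / e) *\<^sub>R (f x - a)) \<longlongrightarrow> (2/e) *\<^sub>R (a - a)) F"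
      by (intro tendsto_scaleR_lcs tendsto_intros f)
    then have "eventually (\<lambda>x. (2 / e) *\<^sub>R (f x - a) \<in> B) F"
      using Bopen B0 by (auto dest: topological_tendstoD)
    then show "eventually (\<lambda>x. dist (p (f x)) (p a) < e) F"
    proof eventually_elim
      case (elim x)
      then have "p ((2 / e) *\<^sub>R (f x - a)) \<le> 1" by (rule Bp)
      then have "(2/e) * p (f x - a) \<le> 1" using e by (simp add: pscale)
      then have "p (f x - a) \<le> e/2" using e by (simp add: field_simps)
      then show ?case using pdiff[of "f x" a] e by (simp add: dist_real_def)
    qed
  qed
  show ?thesis
    apply (rule that[of p])
    using p0 padd pscale pB V B_def apply auto
    unfolding isCont_def by (rule pcont) (rule tendsto_ident_at)
qed


lemma filterlim_uminus_at0: "filterlim uminus (at (0::real)) (at 0)"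
proof -
  have "((\<lambda>x::real. - x) \<longlongrightarrow> - 0) (at 0)" by (intro tendsto_intros)
  then show ?thesis by (auto simp: filterlim_at eventually_at_filter)
qed

lemma dini_sup:
  fixes q :: "real \<Rightarrow> real"
  assumes s: "0 \<le> s" and cont: "continuous_on {0..s} q" and q0: "q 0 \<le> 0"
    and step: "\<And>\<tau> e. 0 \<le> \<tau> \<Longrightarrow> \<tau> < s \<Longrightarrow> e > 0 \<Longrightarrow> \<exists>h. 0 < h \<and> h < e \<and> q (\<tau> + h) \<le> q \<tau> + M * h"
  shows "q s \<le> M * s"
proof -
  define A where "A = {\<tau> \<in> {0..s}. q \<tau> \<le> M * \<tau>}"
  have cl: "closed A" unfolding A_def
    by (intro continuous_on_closed_Collect_le cont continuous_intros)
  have A0: "0 \<in> A" using s q0 by (auto simp: A_def)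
  have bdd: "bdd_above A" by (auto simp: A_def bdd_above_def)
  define \<sigma> where "\<sigma> = Sup A"
  have sA: "\<sigma> \<in> A" unfolding \<sigma>_def using A0 bdd cl by (intro closed_contains_Sup) auto
  have "\<sigma> = s"
  proof (rule ccontr)
    assume ne: "\<sigma> \<noteq> s"
    with sA have lt: "0 \<le> \<sigma>" "\<sigma> < s" "q \<sigma> \<le> M * \<sigma>" by (auto simp: A_def)
    obtain h where h: "0 < h" "h < s - \<sigma>" "q (\<sigma> + h) \<le> q \<sigma> + M * h" using step[OF lt(1,2), of "s - \<sigma>"] lt by auto
    then have "\<sigma> + h \<in> A" using lt by (auto simp: A_def algebra_simps)
    then have "\<sigma> + h \<le> \<sigma>" unfolding \<sigma>_def using bdd by (rule cSup_upper)
    then show False using h by simp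
  qed
  then show ?thesis using sA by (auto simp: A_def)
qed

lemma mvt_pos:
  fixes f f' :: "real \<Rightarrow> 'y::locally_convex_space" and p :: "'y \<Rightarrow> real"
  assumes padd: "\<forall>x y. p (x+y) \<le> p x + p y"
    and pscale: "\<forall>c x. p (c *\<^sub>R x) = \<bar>c\<bar> * p x"
    and pcont: "\<forall>x. isCont p x"
    and s: "0 \<le> s"
    and deriv: "\<forall>\<tau>\<in>{0..s}. ((\<lambda>r. (1/r) *\<^sub>R (f (\<tau> + r) - f \<tau>)) \<longlongrightarrow> f' \<tau>) (at 0)"
    and bound: "\<forall>\<tau>\<in>{0..s}. p (f' \<tau> - c) < M"
  shows "p (f s - f 0 - s *\<^sub>R c) \<le> M * s"
proof -
  define q where "q \<tau> = p (f \<tau> - f 0 - \<tau> *\<^sub>R c)" for \<tau>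
  have fcont: "(f \<longlongrightarrow> f \<tau>) (at \<tau>)" if "\<tau> \<in> {0..s}" for \<tau>
  proof -
    have "((\<lambda>r. r *\<^sub>R ((1/r) *\<^sub>R (f (\<tau> + r) - f \<tau>))) \<longlongrightarrow> 0 *\<^sub>R f' \<tau>) (at 0)"
      using deriv that by (intro tendsto_scaleR_lcs tendsto_intros) auto
    moreover have "eventually (\<lambda>r. r *\<^sub>R ((1/r) *\<^sub>R (f (\<tau> + r) - f \<tau>)) = f (\<tau> + r) - f \<tau>) (at (0::real))"
      by (auto simp: eventually_at_filter)
    ultimately have "((\<lambda>r. f (\<tau> + r) - f \<tau>) \<longlongrightarrow> 0) (at 0)"
      by (simp add: tendsto_cong)
    from tendsto_add[OF this tendsto_const[of "f \<tau>"]]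
    have "((\<lambda>r. f (\<tau> + r)) \<longlongrightarrow> f \<tau>) (at 0)" by simp
    then show ?thesis by (rule LIM_offset_zero_cancel)
  qed
  have qcont: "continuous_on {0..s} q"
    unfolding continuous_on_def
  proof
    fix \<tau> assume t: "\<tau> \<in> {0..s}"
    have "(f \<longlongrightarrow> f \<tau>) (at \<tau> within {0..s})" using fcont[OF t] by (rule tendsto_mono[rotated]) (simp add: at_le)
    then have "((\<lambda>x. f x - f 0 - x *\<^sub>R c) \<longlongrightarrow> f \<tau> - f 0 - \<tau> *\<^sub>R c) (at \<tau> within {0..s})"
      by (intro tendsto_intros tendsto_scaleR_lcs) auto
    from isCont_tendsto_compose[OF pcont[rule_format] this]
    show "(q \<longlongrightarrow> q \<tau>) (at \<tau> within {0..s})" unfolding q_def .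
  qed
  have p0: "p 0 = 0" using pscale[rule_format, of 0 0] by simp
  show ?thesis
  proof (rule dini_sup[of s q M, unfolded q_def, simplified, OF s])
    show "continuous_on {0..s} (\<lambda>\<tau>. p (f \<tau> - f 0 - \<tau> *\<^sub>R c))" using qcont unfolding q_def .
    show "p 0 \<le> 0" using p0 by simp
  next
    fix \<tau> e :: real assume t: "0 \<le> \<tau>" "\<tau> < s" "0 < e"
    have "((\<lambda>r. (1/r) *\<^sub>R (f (\<tau> + r) - f \<tau>)) \<longlongrightarrow> f' \<tau>) (at_right 0)"
      using deriv t by (intro tendsto_mono[OF at_le[of "{0<..}" UNIV]]) auto
    then have "((\<lambda>r. (1/r) *\<^sub>R (f (\<tau> + r) - f \<tau>) - c) \<longlongrightarrow> f' \<tau> - c) (at_right 0)"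
      by (intro tendsto_intros)
    then have "((\<lambda>r. p ((1/r) *\<^sub>R (f (\<tau> + r) - f \<tau>) - c)) \<longlongrightarrow> p (f' \<tau> - c)) (at_right 0)"
      by (rule isCont_tendsto_compose[OF pcont[rule_format]])
    then have "eventually (\<lambda>r. p ((1/r) *\<^sub>R (f (\<tau> + r) - f \<tau>) - c) < M) (at_right 0)"
      using bound t by (intro order_tendstoD) auto
    moreover have "eventually (\<lambda>r::real. 0 < r \<and> r < e) (at_right 0)"
      using t by (intro eventually_conj eventually_at_right_less) (auto simp: eventually_at_right_field intro!: exI[of _ e])
    ultimately have "eventually (\<lambda>r. (0 < r \<and> r < e) \<and> p ((1/r) *\<^sub>R (f (\<tau> + r) - f \<tau>) - c) < M) (at_right (0::real))"
      by eventually_elim auto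
    then obtain h where h: "0 < h" "h < e" "p ((1/h) *\<^sub>R (f (\<tau> + h) - f \<tau>) - c) < M"
      using eventually_happens trivial_limit_at_right_real by blast
    have "f (\<tau> + h) - f 0 - (\<tau> + h) *\<^sub>R c = (f \<tau> - f 0 - \<tau> *\<^sub>R c) + h *\<^sub>R ((1/h) *\<^sub>R (f (\<tau> + h) - f \<tau>) - c)"
      using h by (simp add: algebra_simps scaleR_add_left)
    then have "p (f (\<tau> + h) - f 0 - (\<tau> + h) *\<^sub>R c) \<le> p (f \<tau> - f 0 - \<tau> *\<^sub>R c) + h * p ((1/h) *\<^sub>R (f (\<tau> + h) - f \<tau>) - c)"
    proof -
      have "p (h *\<^sub>R ((1/h) *\<^sub>R (f (\<tau> + h) - f \<tau>) - c)) = h * p ((1/h) *\<^sub>R (f (\<tau> + h) - f \<tau>) - c)"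
        using pscale h by simp
      then show ?thesis using padd \<open>f (\<tau> + h) - f 0 - (\<tau> + h) *\<^sub>R c = _\<close> by metis
    qed
    also have "\<dots> \<le> p (f \<tau> - f 0 - \<tau> *\<^sub>R c) + M * h" using h by (simp add: mult.commute)
    finally show "\<exists>h. 0 < h \<and> h < e \<and> p (f (\<tau> + h) - f 0 - (\<tau> + h) *\<^sub>R c) \<le> p (f \<tau> - f 0 - \<tau> *\<^sub>R c) + M * h"
      using h by blast
  qed
qed

lemma mvt_seg:
  fixes f f' :: "real \<Rightarrow> 'y::locally_convex_space" and p :: "'y \<Rightarrow> real"
  assumes padd: "\<forall>x y. p (x+y) \<le> p x + p y"
    and pscale: "\<forall>c x. p (c *\<^sub>R x) = \<bar>c\<bar> * p x"
    and pcont: "\<forall>x. isCont p x"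
    and deriv: "\<forall>\<tau>\<in>closed_segment 0 s. ((\<lambda>r. (1/r) *\<^sub>R (f (\<tau> + r) - f \<tau>)) \<longlongrightarrow> f' \<tau>) (at 0)"
    and bound: "\<forall>\<tau>\<in>closed_segment 0 s. p (f' \<tau> - c) < M"
  shows "p (f s - f 0 - s *\<^sub>R c) \<le> M * \<bar>s\<bar>"
proof (cases "0 \<le> s")
  case True
  then show ?thesis using mvt_pos[OF padd pscale pcont True, of f f' c M] deriv bound
    by (simp add: closed_segment_eq_real_ivl1)
next
  case False
  define g where "g \<tau> = f (- \<tau>)" for \<tau>
  define g' where "g' \<tau> = - f' (- \<tau>)" for \<tau>
  have seg: "\<tau> \<in> {0..-s} \<Longrightarrow> - \<tau> \<in> closed_segment 0 s" for \<tau>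
    using False by (auto simp: closed_segment_eq_real_ivl)
  have "p (g (-s) - g 0 - (-s) *\<^sub>R (-c)) \<le> M * (-s)"
  proof (rule mvt_pos[OF padd pscale pcont])
    show "0 \<le> - s" using False by simp
    show "\<forall>\<tau>\<in>{0..-s}. ((\<lambda>r. (1/r) *\<^sub>R (g (\<tau> + r) - g \<tau>)) \<longlongrightarrow> g' \<tau>) (at 0)"
    proof
      fix \<tau> assume t: "\<tau> \<in> {0..-s}"
      have D: "((\<lambda>r. (1/r) *\<^sub>R (f (-\<tau> + r) - f (-\<tau>))) \<longlongrightarrow> f' (-\<tau>)) (at 0)"
        using deriv seg[OF t] by blast
      have "((\<lambda>r. (1/(-r)) *\<^sub>R (f (-\<tau> + (-r)) - f (-\<tau>))) \<longlongrightarrow> f' (-\<tau>)) (at 0)"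
        using filterlim_compose[OF D filterlim_uminus_at0] by simp
      then have "((\<lambda>r. - ((1/(-r)) *\<^sub>R (f (-\<tau> + (-r)) - f (-\<tau>)))) \<longlongrightarrow> - f' (-\<tau>)) (at 0)"
        by (rule tendsto_minus)
      then show "((\<lambda>r. (1/r) *\<^sub>R (g (\<tau> + r) - g \<tau>)) \<longlongrightarrow> g' \<tau>) (at 0)"
        by (simp add: g_def g'_def)
    qed
    show "\<forall>\<tau>\<in>{0..-s}. p (g' \<tau> - - c) < M"
    proof
      fix \<tau> assume t: "\<tau> \<in> {0..-s}"
      have "p (g' \<tau> - - c) = p ((-1) *\<^sub>R (f' (-\<tau>) - c))" by (simp add: g'_def)
      also have "\<dots> = p (f' (-\<tau>) - c)" using pscale[rule_format, of "-1" "f' (-\<tau>) - c"] by (simp only: abs_neg_one mult_1)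
      finally show "p (g' \<tau> - - c) < M" using bound seg[OF t] by simp
    qed
  qed
  then show ?thesis using False by (simp add: g_def)
qed


lemma L_add: "X \<in> one_param_subgroups \<Longrightarrow> X (s + t) = X s + X t"
  by (simp add: one_param_subgroups_def)
lemma L_zero: "X \<in> one_param_subgroups \<Longrightarrow> X 0 = 0"
  using L_add[of X 0 0] by (metis add.right_neutral add_left_cancel)
lemma L_isCont: "X \<in> one_param_subgroups \<Longrightarrow> isCont X x"
  by (simp add: one_param_subgroups_def continuous_on_eq_continuous_at)

lemma gpow_0[simp]: "gpow a 0 = 0" by (simp add: gpow_def)
lemma gpow_Suc: "gpow a (Suc n) = a + gpow a n" by (simp add: gpow_def)
lemma gpow_Suc_right: "gpow a (Suc n) = gpow a n + (a::'a::monoid_add)"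
proof (induction n)
  case (Suc n)
  have "gpow a (Suc (Suc n)) = a + (gpow a n + a)" using Suc by (simp only: gpow_Suc)
  also have "\<dots> = gpow a (Suc n) + a" by (simp add: gpow_Suc add.assoc)
  finally show ?case .
qed (simp add: gpow_def)
lemma gpow_zero[simp]: "gpow (0::'a::monoid_add) n = 0"
  by (induction n) (simp_all add: gpow_Suc)
lemma gpow_tendsto:
  fixes f :: "_ \<Rightarrow> 'g::topological_monoid_add"
  shows "(f \<longlongrightarrow> a) F \<Longrightarrow> ((\<lambda>x. gpow (f x) n) \<longlongrightarrow> gpow a n) F"
  by (induction n) (simp_all add: gpow_Suc tendsto_add)

lemma small2:
  fixes T :: "'g::topological_monoid_add set"
  assumes "open T" "x \<in> T"
  shows "\<exists>W. open W \<and> 0 \<in> W \<and> (\<forall>a\<in>W. \<forall>b\<in>W. x + a + b \<in> T)"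
proof -
  have "((\<lambda>q. x + fst q + snd q) \<longlongrightarrow> x + fst (0::'g,0::'g) + snd (0::'g,0::'g)) (nhds (0,0))"
  proof -
    have id: "((\<lambda>q. q) \<longlongrightarrow> (0::'g,0::'g)) (nhds (0,0))" by (rule filterlim_ident)
    show ?thesis by (rule tendsto_add[OF tendsto_add[OF tendsto_const tendsto_fst[OF id]] tendsto_snd[OF id]])
  qed
  then have "eventually (\<lambda>q. x + fst q + snd q \<in> T) (nhds (0,0))"
    using assms by (auto dest: topological_tendstoD)
  then have "eventually (\<lambda>q. x + fst q + snd q \<in> T) (nhds 0 \<times>\<^sub>F nhds 0)" by (simp add: nhds_prod)
  then obtain Q where Q: "eventually Q (nhds 0)" "\<And>a b. Q a \<Longrightarrow> Q b \<Longrightarrow> x + a + b \<in> T"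
    unfolding eventually_prod_same by auto
  then obtain S where S: "open S" "0 \<in> S" "\<forall>y\<in>S. Q y" unfolding eventually_nhds by auto
  show ?thesis using Q S by (intro exI[of _ S]) auto
qed


lemma LUC_cont:
  fixes \<phi> :: "'g::{topological_group_add,t2_space} \<Rightarrow> 'y::locally_convex_space"
  assumes "\<phi> \<in> LUC_loc"
  shows "isCont \<phi> x"
proof -
  obtain V where V: "nhd_of V x" and H: "\<And>U. nhd_of U 0 \<Longrightarrow> \<exists>W. nhd_of W 0 \<and>
             (\<forall>a\<in>V. \<forall>b\<in>V. - a + b \<in> W \<longrightarrow> \<phi> a - \<phi> b \<in> U)"
    using assms unfolding LUC_loc_def by blast
  show ?thesis unfolding isCont_def
  proof (rule topological_tendstoI)
    fix S assume S: "open S" "\<phi> x \<in> S"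
    define U where "U = (\<lambda>y. y + \<phi> x) -` S"
    have "open U" unfolding U_def using S by (intro open_vimage) (auto intro: continuous_intros)
    moreover have "0 \<in> U" using S by (simp add: U_def)
    ultimately have "nhd_of U 0" by (auto simp: nhd_of_def)
    then obtain W where W: "nhd_of W 0" and HW: "\<forall>a\<in>V. \<forall>b\<in>V. - a + b \<in> W \<longrightarrow> \<phi> a - \<phi> b \<in> U"
      using H by blast
    obtain TW where TW: "open TW" "0 \<in> TW" "TW \<subseteq> W" using W by (auto simp: nhd_of_def)
    obtain TV where TV: "open TV" "x \<in> TV" "TV \<subseteq> V" using V by (auto simp: nhd_of_def)
    have "((\<lambda>y. - y + x) \<longlongrightarrow> - x + x) (at x)" by (intro tendsto_intros)
    then have "eventually (\<lambda>y. - y + x \<in> TW) (at x)" using TW by (auto dest: topological_tendstoD)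
    moreover have "eventually (\<lambda>y. y \<in> TV) (at x)" using TV by (auto simp: eventually_at_topological)
    ultimately show "eventually (\<lambda>y. \<phi> y \<in> S) (at x)"
    proof eventually_elim
      case (elim y)
      then have "\<phi> y - \<phi> x \<in> U" using HW TV TW V by blast
      then show ?case by (simp add: U_def)
    qed
  qed
qed



lemma hasderiv:
  fixes \<phi> :: "'g::{topological_group_add,t2_space} \<Rightarrow> 'y::locally_convex_space"
  assumes "\<phi> \<in> LUC1_loc" "X \<in> one_param_subgroups"
  shows "((\<lambda>t. (1/t) *\<^sub>R (\<phi> (g + X t) - \<phi> g)) \<longlongrightarrow> left_deriv X \<phi> g) (at 0)"
proof -
  obtain d where d: "((\<lambda>t. (1/t) *\<^sub>R (\<phi> (g + X t) - \<phi> g)) \<longlongrightarrow> d) (at 0)"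
    using assms unfolding LUC1_loc_def has_left_deriv_def by blast
  then have "left_deriv X \<phi> g = d" unfolding left_deriv_def by (intro tendsto_Lim) auto
  then show ?thesis using d by simp
qed

lemma scal_part:
  fixes \<phi> :: "'g::{topological_group_add,t2_space} \<Rightarrow> 'y::locally_convex_space"
  assumes "\<phi> \<in> LUC1_loc" "X \<in> one_param_subgroups"
  shows "((\<lambda>t. (1/t) *\<^sub>R (\<phi> (g + X (c * t)) - \<phi> g)) \<longlongrightarrow> c *\<^sub>R left_deriv X \<phi> g) (at 0)"
proof (cases "c = 0")
  case True
  then show ?thesis using L_zero[OF assms(2)] by simp
next
  case False
  have D: "((\<lambda>t. (1/t) *\<^sub>R (\<phi> (g + X t) - \<phi> g)) \<longlongrightarrow> left_deriv X \<phi> g) (at 0)"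
    by (rule hasderiv[OF assms])
  have lim: "filterlim (\<lambda>t. c * t) (at 0) (at (0::real))"
  proof -
    have "((\<lambda>t. c * t) \<longlongrightarrow> c * 0) (at (0::real))" by (intro tendsto_intros)
    then show ?thesis using False by (auto simp: filterlim_at eventually_at_filter)
  qed
  have T: "((\<lambda>t. c *\<^sub>R ((1/(c*t)) *\<^sub>R (\<phi> (g + X (c*t)) - \<phi> g))) \<longlongrightarrow> c *\<^sub>R left_deriv X \<phi> g) (at 0)"
    by (intro tendsto_scaleR_lcs tendsto_const filterlim_compose[OF D lim])
  have E: "eventually (\<lambda>t. c *\<^sub>R ((1/(c*t)) *\<^sub>R (\<phi> (g + X (c*t)) - \<phi> g)) = (1/t) *\<^sub>R (\<phi> (g + X (c * t)) - \<phi> g)) (at (0::real))"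
    using False by (auto simp: eventually_at_filter)
  from tendsto_cong[OF E] T show ?thesis by (rule iffD1)
qed

lemma smallY:
  fixes X1 X2 X :: "real \<Rightarrow> 'g::{topological_group_add,t2_space}"
  assumes L: "X1 \<in> one_param_subgroups" "X2 \<in> one_param_subgroups" "X \<in> one_param_subgroups"
    and uc: "unif_conv_on_compacts (\<lambda>n t. gpow (X1 (t / real n) + X2 (t / real n)) n) X"
    and W: "open W" "0 \<in> W"
  shows "\<exists>\<delta>>0. \<forall>k u. \<bar>u\<bar> \<le> \<delta> \<longrightarrow> gpow (X1 (u / real k) + X2 (u / real k)) k \<in> W \<and> X1 u \<in> W \<and> X2 u \<in> W"
proof -
  define Y where "Y k u = gpow (X1 (u / real k) + X2 (u / real k)) k" for k u
  obtain W' where W': "open W'" "0 \<in> W'" "\<forall>a\<in>W'. \<forall>b\<in>W'. 0 + a + b \<in> W"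
    using small2[OF W] by blast
  have "nhd_of W' 0" using W' by (auto simp: nhd_of_def)
  then have "eventually (\<lambda>n. \<forall>t\<in>{-1..1}. - X t + Y n t \<in> W') sequentially"
    using uc unfolding unif_conv_on_compacts_def Y_def by auto
  then obtain K0 where K0: "\<And>n t. n \<ge> K0 \<Longrightarrow> t \<in> {-1..1} \<Longrightarrow> - X t + Y n t \<in> W'"
    unfolding eventually_sequentially by blast
  have tX: "\<And>Z. Z \<in> one_param_subgroups \<Longrightarrow> (Z \<longlongrightarrow> 0) (at (0::real))"
    using L_isCont L_zero by (metis isCont_def)
  have e1: "eventually (\<lambda>u. X u \<in> W') (at (0::real))" using tX[OF L(3)] W' by (auto dest: topological_tendstoD)
  have e2: "eventually (\<lambda>u. X1 u \<in> W) (at (0::real))" using tX[OF L(1)] W by (auto dest: topological_tendstoD)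
  have e3: "eventually (\<lambda>u. X2 u \<in> W) (at (0::real))" using tX[OF L(2)] W by (auto dest: topological_tendstoD)
  have e4: "eventually (\<lambda>u. \<forall>k\<in>{..<K0}. Y k u \<in> W) (at (0::real))"
  proof (rule eventually_ball_finite)
    show "\<forall>k\<in>{..<K0}. eventually (\<lambda>u. Y k u \<in> W) (at 0)"
    proof
      fix k
      have "((\<lambda>u. u * inverse (real k)) \<longlongrightarrow> 0 * inverse (real k)) (at (0::real))" by (intro tendsto_intros)
      then have dk: "((\<lambda>u. u / real k) \<longlongrightarrow> 0) (at (0::real))" by (simp add: divide_inverse)
      have "((\<lambda>u. X1 (u / real k) + X2 (u / real k)) \<longlongrightarrow> X1 0 + X2 0) (at 0)"
        by (rule tendsto_add[OF isCont_tendsto_compose[OF L_isCont[OF L(1)] dk] isCont_tendsto_compose[OF L_isCont[OF L(2)] dk]])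
      then have "((\<lambda>u. Y k u) \<longlongrightarrow> gpow (X1 0 + X2 0) k) (at 0)"
        unfolding Y_def by (rule gpow_tendsto)
      then show "eventually (\<lambda>u. Y k u \<in> W) (at 0)"
        using W L_zero[OF L(1)] L_zero[OF L(2)] by (auto dest: topological_tendstoD)
    qed
  qed simp
  have e5: "eventually (\<lambda>u. \<bar>u\<bar> \<le> (1::real)) (at 0)"
    by (auto simp: eventually_at intro!: exI[of _ 1])
  have "eventually (\<lambda>u. X u \<in> W' \<and> X1 u \<in> W \<and> X2 u \<in> W \<and> (\<forall>k\<in>{..<K0}. Y k u \<in> W) \<and> \<bar>u\<bar> \<le> 1) (at (0::real))"
    using e1 e2 e3 e4 e5 by eventually_elim auto
  then obtain d where d: "d > 0" and dH: "\<And>u. u \<noteq> 0 \<Longrightarrow> dist u 0 \<le> d \<Longrightarrow>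
      X u \<in> W' \<and> X1 u \<in> W \<and> X2 u \<in> W \<and> (\<forall>k\<in>{..<K0}. Y k u \<in> W) \<and> \<bar>u\<bar> \<le> 1"
    unfolding eventually_at_le by auto
  have "\<forall>k u. \<bar>u\<bar> \<le> d \<longrightarrow> Y k u \<in> W \<and> X1 u \<in> W \<and> X2 u \<in> W"
  proof (intro allI impI)
    fix k u assume u: "\<bar>u\<bar> \<le> d"
    show "Y k u \<in> W \<and> X1 u \<in> W \<and> X2 u \<in> W"
    proof (cases "u = 0")
      case True
      then show ?thesis using W L_zero[OF L(1)] L_zero[OF L(2)] by (simp add: Y_def)
    next
      case False
      then have H: "X u \<in> W' \<and> X1 u \<in> W \<and> X2 u \<in> W \<and> (\<forall>k\<in>{..<K0}. Y k u \<in> W) \<and> \<bar>u\<bar> \<le> 1"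
        using dH u by auto
      have "Y k u \<in> W"
      proof (cases "k < K0")
        case True then show ?thesis using H by auto
      next
        case False
        then have "- X u + Y k u \<in> W'" using K0[of k u] H by (auto simp: abs_le_iff)
        then have "0 + X u + (- X u + Y k u) \<in> W" using W' H by blast
        then show ?thesis by (simp add: add.assoc[symmetric])
      qed
      then show ?thesis using H by auto
    qed
  qed
  then show ?thesis using d unfolding Y_def by blast
qed


lemma add_part:
  fixes \<phi> :: "'g::{topological_group_add,t2_space} \<Rightarrow> 'y::locally_convex_space"
    and X1 X2 X :: "real \<Rightarrow> 'g"
  assumes phi: "\<phi> \<in> LUC1_loc"
    and L: "X1 \<in> one_param_subgroups" "X2 \<in> one_param_subgroups" "X \<in> one_param_subgroups"
    and uc: "unif_conv_on_compacts (\<lambda>n t. gpow (X1 (t / real n) + X2 (t / real n)) n) X"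
  shows "((\<lambda>t. (1/t) *\<^sub>R (\<phi> (g + X t) - \<phi> g)) \<longlongrightarrow> left_deriv X1 \<phi> g + left_deriv X2 \<phi> g) (at 0)"
proof -
  define D1 where "D1 = left_deriv X1 \<phi>"
  define D2 where "D2 = left_deriv X2 \<phi>"
  define d where "d = D1 g + D2 g"
  define Y where "Y k u = gpow (X1 (u / real k) + X2 (u / real k)) k" for k u
  have hd1: "((\<lambda>r. (1/r) *\<^sub>R (\<phi> (h + X1 r) - \<phi> h)) \<longlongrightarrow> D1 h) (at 0)" for h
    unfolding D1_def by (rule hasderiv[OF phi L(1)])
  have hd2: "((\<lambda>r. (1/r) *\<^sub>R (\<phi> (h + X2 r) - \<phi> h)) \<longlongrightarrow> D2 h) (at 0)" for h
    unfolding D2_def by (rule hasderiv[OF phi L(2)])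
  have cD1: "isCont D1 y" for y
    using phi L(1) unfolding D1_def LUC1_loc_def by (intro LUC_cont) auto
  have cD2: "isCont D2 y" for y
    using phi L(2) unfolding D2_def LUC1_loc_def by (intro LUC_cont) auto
  have cphi: "isCont \<phi> y" for y
    using phi unfolding LUC1_loc_def by (intro LUC_cont) auto
  show ?thesis unfolding D1_def[symmetric] D2_def[symmetric] d_def[symmetric]
  proof (rule topological_tendstoI)
    fix S assume S: "open S" "d \<in> S"
    define U where "U = (\<lambda>y. y + d) -` S"
    have Uo: "open U" unfolding U_def using S by (intro open_vimage) (auto intro: continuous_intros)
    have U0: "0 \<in> U" using S by (simp add: U_def)
    obtain p :: "'y \<Rightarrow> real" where p0: "\<forall>x. 0 \<le> p x" and padd: "\<forall>x y. p (x+y) \<le> p x + p y"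
      and pscale: "\<forall>c x. p (c *\<^sub>R x) = \<bar>c\<bar> * p x" and pcont: "\<forall>x. isCont p x"
      and pU: "\<forall>x. p x < 1 \<longrightarrow> x \<in> U"
      using gauge_exists[OF Uo U0] by blast
    define e :: real where "e = 1/4"
    have pz: "p 0 = 0" using pscale[rule_format, of 0 0] by simp
    define Pg where "Pg y = (p (D1 y - D1 g) < e \<and> p (D2 y - D2 g) < e)" for y
    have "((\<lambda>y. p (D1 y - D1 g)) \<longlongrightarrow> p (D1 g - D1 g)) (at g)"
      by (rule isCont_tendsto_compose[OF pcont[rule_format]]) (intro tendsto_intros cD1[unfolded isCont_def])
    then have ev1: "eventually (\<lambda>y. p (D1 y - D1 g) < e) (at g)"
      using pz by (intro order_tendstoD) (auto simp: e_def)
    have "((\<lambda>y. p (D2 y - D2 g)) \<longlongrightarrow> p (D2 g - D2 g)) (at g)"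
      by (rule isCont_tendsto_compose[OF pcont[rule_format]]) (intro tendsto_intros cD2[unfolded isCont_def])
    then have ev2: "eventually (\<lambda>y. p (D2 y - D2 g) < e) (at g)"
      using pz by (intro order_tendstoD) (auto simp: e_def)
    have "eventually Pg (at g)" using ev1 ev2 unfolding Pg_def by eventually_elim auto
    then have evn: "eventually (\<lambda>x. x \<noteq> g \<longrightarrow> x \<in> UNIV \<longrightarrow> Pg x) (nhds g)"
      unfolding eventually_at_filter .
    have "Pg g" using pz by (simp add: Pg_def e_def)
    with evn have "eventually Pg (nhds g)" by (auto elim: eventually_mono)
    then obtain T where T: "open T" "g \<in> T" "\<forall>y\<in>T. Pg y" unfolding eventually_nhds by auto
    obtain W1 where W1: "open W1" "0 \<in> W1" "\<forall>a\<in>W1. \<forall>b\<in>W1. g + a + b \<in> T"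
      using small2[OF T(1,2)] by blast
    obtain W2 where W2: "open W2" "0 \<in> W2" "\<forall>a\<in>W2. \<forall>b\<in>W2. 0 + a + b \<in> W1"
      using small2[OF W1(1,2)] by blast
    define W where "W = W1 \<inter> W2"
    have Wo: "open W" "0 \<in> W" using W1 W2 by (auto simp: W_def)
    obtain \<delta> where \<delta>: "\<delta> > 0" and \<delta>H: "\<And>k u. \<bar>u\<bar> \<le> \<delta> \<Longrightarrow> Y k u \<in> W \<and> X1 u \<in> W \<and> X2 u \<in> W"
      using smallY[OF L uc Wo] unfolding Y_def by blast
    have main: "(1/t) *\<^sub>R (\<phi> (g + X t) - \<phi> g) \<in> S" if t: "t \<noteq> 0" "\<bar>t\<bar> < \<delta>" for t
    proof -
      have bound: "p (\<phi> (g + Y n t) - \<phi> g - t *\<^sub>R d) \<le> 2 * e * \<bar>t\<bar>" if n: "n \<ge> 1" for n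
      proof -
        define s where "s = t / real n"
        define a where "a = X1 s + X2 s"
        define P where "P k = gpow a k" for k
        have sabs: "\<bar>s\<bar> \<le> \<bar>t\<bar>"
        proof -
          have "\<bar>t\<bar> * 1 \<le> \<bar>t\<bar> * real n" using n by (intro mult_left_mono) auto
          then show ?thesis using n by (simp add: s_def abs_divide divide_le_eq)
        qed
        have seg: "\<tau> \<in> closed_segment 0 s \<Longrightarrow> \<bar>\<tau>\<bar> \<le> \<delta>" for \<tau>
          using sabs t by (auto simp: closed_segment_eq_real_ivl split: if_splits)
        have PW: "P k \<in> W" if k: "k \<le> n" for k
        proof (cases "k = 0")
          case True then show ?thesis using Wo by (simp add: P_def)
        next
          case False
          have "(t * real k / real n) / real k = s" using False by (simp add: s_def)
          then have "P k = Y k (t * real k / real n)" by (simp add: P_def Y_def a_def)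
          moreover have "\<bar>t * real k / real n\<bar> \<le> \<delta>"
          proof -
            have "\<bar>t * real k / real n\<bar> = \<bar>t\<bar> * (real k / real n)" by (simp add: abs_mult)
            also have "\<dots> \<le> \<bar>t\<bar> * 1" using k n by (intro mult_left_mono) auto
            finally show ?thesis using t by simp
          qed
          ultimately show ?thesis using \<delta>H by auto
        qed
        have E1: "p (\<phi> (g + P k + X1 s) - \<phi> (g + P k) - s *\<^sub>R D1 g) \<le> e * \<bar>s\<bar>" if k: "k < n" for k
        proof -
          have "p ((\<lambda>\<tau>. \<phi> (g + P k + X1 \<tau>)) s - (\<lambda>\<tau>. \<phi> (g + P k + X1 \<tau>)) 0 - s *\<^sub>R D1 g) \<le> e * \<bar>s\<bar>"
          proof (rule mvt_seg[OF padd pscale pcont, where f' = "\<lambda>\<tau>. D1 (g + P k + X1 \<tau>)"])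
            show "\<forall>\<tau>\<in>closed_segment 0 s. ((\<lambda>r. (1/r) *\<^sub>R (\<phi> (g + P k + X1 (\<tau> + r)) - \<phi> (g + P k + X1 \<tau>))) \<longlongrightarrow> D1 (g + P k + X1 \<tau>)) (at 0)"
            proof
              fix \<tau> :: real
              show "((\<lambda>r. (1/r) *\<^sub>R (\<phi> (g + P k + X1 (\<tau> + r)) - \<phi> (g + P k + X1 \<tau>))) \<longlongrightarrow> D1 (g + P k + X1 \<tau>)) (at 0)"
                using hd1[of "g + P k + X1 \<tau>"] by (simp add: L_add[OF L(1)] add.assoc)
            qed
            show "\<forall>\<tau>\<in>closed_segment 0 s. p (D1 (g + P k + X1 \<tau>) - D1 g) < e"
            proof
              fix \<tau> assume "\<tau> \<in> closed_segment 0 s"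
              then have "X1 \<tau> \<in> W1" using \<delta>H seg by (auto simp: W_def)
              moreover have "P k \<in> W1" using PW k by (auto simp: W_def)
              ultimately have "g + P k + X1 \<tau> \<in> T" using W1 by blast
              then show "p (D1 (g + P k + X1 \<tau>) - D1 g) < e" using T by (auto simp: Pg_def)
            qed
          qed
          then show ?thesis using L_zero[OF L(1)] by simp
        qed
        have E2: "p (\<phi> (g + P k + X1 s + X2 s) - \<phi> (g + P k + X1 s) - s *\<^sub>R D2 g) \<le> e * \<bar>s\<bar>" if k: "k < n" for k
        proof -
          have "p ((\<lambda>\<tau>. \<phi> (g + P k + X1 s + X2 \<tau>)) s - (\<lambda>\<tau>. \<phi> (g + P k + X1 s + X2 \<tau>)) 0 - s *\<^sub>R D2 g) \<le> e * \<bar>s\<bar>"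
          proof (rule mvt_seg[OF padd pscale pcont, where f' = "\<lambda>\<tau>. D2 (g + P k + X1 s + X2 \<tau>)"])
            show "\<forall>\<tau>\<in>closed_segment 0 s. ((\<lambda>r. (1/r) *\<^sub>R (\<phi> (g + P k + X1 s + X2 (\<tau> + r)) - \<phi> (g + P k + X1 s + X2 \<tau>))) \<longlongrightarrow> D2 (g + P k + X1 s + X2 \<tau>)) (at 0)"
            proof
              fix \<tau> :: real
              show "((\<lambda>r. (1/r) *\<^sub>R (\<phi> (g + P k + X1 s + X2 (\<tau> + r)) - \<phi> (g + P k + X1 s + X2 \<tau>))) \<longlongrightarrow> D2 (g + P k + X1 s + X2 \<tau>)) (at 0)"
                using hd2[of "g + P k + X1 s + X2 \<tau>"] by (simp add: L_add[OF L(2)] add.assoc)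
            qed
            show "\<forall>\<tau>\<in>closed_segment 0 s. p (D2 (g + P k + X1 s + X2 \<tau>) - D2 g) < e"
            proof
              fix \<tau> assume "\<tau> \<in> closed_segment 0 s"
              then have "X2 \<tau> \<in> W2" using \<delta>H seg by (auto simp: W_def)
              moreover have "X1 s \<in> W2" using \<delta>H seg[of s] by (auto simp: W_def)
              ultimately have "0 + X1 s + X2 \<tau> \<in> W1" using W2 by blast
              moreover have "P k \<in> W1" using PW k by (auto simp: W_def)
              ultimately have "g + P k + (X1 s + X2 \<tau>) \<in> T" using W1 by auto
              then have "g + P k + X1 s + X2 \<tau> \<in> T" by (simp add: add.assoc)
              then show "p (D2 (g + P k + X1 s + X2 \<tau>) - D2 g) < e" using T by (auto simp: Pg_def)
            qed
          qed
          then show ?thesis using L_zero[OF L(2)] by simp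
        qed
        have tele: "m \<le> n \<longrightarrow> p (\<phi> (g + P m) - \<phi> g - (real m * s) *\<^sub>R d) \<le> 2 * e * real m * \<bar>s\<bar>" for m
        proof (induction m)
          case 0 then show ?case using pz by (simp add: P_def)
        next
          case (Suc m)
          show ?case
          proof
            assume m: "Suc m \<le> n"
            define A where "A = \<phi> (g + P m) - \<phi> g - (real m * s) *\<^sub>R d"
            define B1 where "B1 = \<phi> (g + P m + X1 s) - \<phi> (g + P m) - s *\<^sub>R D1 g"
            define B2 where "B2 = \<phi> (g + P m + X1 s + X2 s) - \<phi> (g + P m + X1 s) - s *\<^sub>R D2 g"
            have "g + P (Suc m) = g + P m + X1 s + X2 s"
              by (simp add: P_def gpow_Suc_right a_def add.assoc)
            then have eq: "\<phi> (g + P (Suc m)) - \<phi> g - (real (Suc m) * s) *\<^sub>R d = A + B1 + B2"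
              by (simp add: A_def B1_def B2_def d_def algebra_simps)
            have "p (A + B1 + B2) \<le> p A + p B1 + p B2" using padd by (metis add_right_mono order_trans)
            also have "\<dots> \<le> 2 * e * real m * \<bar>s\<bar> + e * \<bar>s\<bar> + e * \<bar>s\<bar>"
              using Suc.IH m E1[of m] E2[of m] unfolding A_def B1_def B2_def by (intro add_mono) auto
            also have "\<dots> = 2 * e * real (Suc m) * \<bar>s\<bar>" by (simp add: algebra_simps)
            finally show "p (\<phi> (g + P (Suc m)) - \<phi> g - (real (Suc m) * s) *\<^sub>R d) \<le> 2 * e * real (Suc m) * \<bar>s\<bar>"
              using eq by simp
          qed
        qed
        have e1: "P n = Y n t" by (simp add: P_def Y_def a_def s_def)
        have e2: "real n * s = t" using n by (simp add: s_def)
        have e3: "2 * e * real n * \<bar>s\<bar> = 2 * e * \<bar>t\<bar>" using n by (simp add: s_def abs_divide)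
        have "p (\<phi> (g + Y n t) - \<phi> g - t *\<^sub>R d) \<le> 2 * e * real n * \<bar>s\<bar>"
          using tele[of n] e1 e2 by simp
        then show ?thesis using e3 by linarith
      qed
      have "((\<lambda>n. - X t + Y n t) \<longlongrightarrow> 0) sequentially"
      proof (rule topological_tendstoI)
        fix W0 :: "'g set" assume "open W0" "0 \<in> W0"
        then have "nhd_of W0 0" by (auto simp: nhd_of_def)
        moreover have "compact {t}" by simp
        ultimately have "eventually (\<lambda>n. \<forall>u\<in>{t}. - X u + Y n u \<in> W0) sequentially"
          using uc unfolding unif_conv_on_compacts_def Y_def by blast
        then show "eventually (\<lambda>n. - X t + Y n t \<in> W0) sequentially" by simp
      qed
      then have "((\<lambda>n. X t + (- X t + Y n t)) \<longlongrightarrow> X t + 0) sequentially"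
        by (intro tendsto_intros)
      then have "((\<lambda>n. Y n t) \<longlongrightarrow> X t) sequentially" by (simp add: add.assoc[symmetric])
      then have "((\<lambda>n. \<phi> (g + Y n t)) \<longlongrightarrow> \<phi> (g + X t)) sequentially"
        by (intro isCont_tendsto_compose[OF cphi] tendsto_intros)
      then have "((\<lambda>n. \<phi> (g + Y n t) - \<phi> g - t *\<^sub>R d) \<longlongrightarrow> \<phi> (g + X t) - \<phi> g - t *\<^sub>R d) sequentially"
        by (intro tendsto_intros)
      then have "((\<lambda>n. p (\<phi> (g + Y n t) - \<phi> g - t *\<^sub>R d)) \<longlongrightarrow> p (\<phi> (g + X t) - \<phi> g - t *\<^sub>R d)) sequentially"
        by (rule isCont_tendsto_compose[OF pcont[rule_format]])
      moreover have "eventually (\<lambda>n. p (\<phi> (g + Y n t) - \<phi> g - t *\<^sub>R d) \<le> 2 * e * \<bar>t\<bar>) sequentially"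
        using bound unfolding eventually_sequentially by blast
      ultimately have B: "p (\<phi> (g + X t) - \<phi> g - t *\<^sub>R d) \<le> 2 * e * \<bar>t\<bar>"
        by (intro tendsto_upperbound) auto
      have q1: "(1/t) *\<^sub>R (\<phi> (g + X t) - \<phi> g) - d = (1/t) *\<^sub>R (\<phi> (g + X t) - \<phi> g - t *\<^sub>R d)"
        using t by (simp add: algebra_simps)
      have q2: "p ((1/t) *\<^sub>R (\<phi> (g + X t) - \<phi> g - t *\<^sub>R d)) = (1/\<bar>t\<bar>) * p (\<phi> (g + X t) - \<phi> g - t *\<^sub>R d)"
        using pscale by simp
      have q3: "(1/\<bar>t\<bar>) * p (\<phi> (g + X t) - \<phi> g - t *\<^sub>R d) \<le> 2 * e"
        using B t by (simp add: field_simps)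
      have "p ((1/t) *\<^sub>R (\<phi> (g + X t) - \<phi> g) - d) = (1/\<bar>t\<bar>) * p (\<phi> (g + X t) - \<phi> g - t *\<^sub>R d)"
        unfolding q1 by (rule q2)
      also have "\<dots> \<le> 2 * e" by (rule q3)
      also have "\<dots> < 1" by (simp add: e_def)
      finally have "p ((1/t) *\<^sub>R (\<phi> (g + X t) - \<phi> g) - d) < 1" .
      then have "(1/t) *\<^sub>R (\<phi> (g + X t) - \<phi> g) - d \<in> U" using pU by blast
      then show ?thesis by (simp add: U_def)
    qed
    show "eventually (\<lambda>t. (1/t) *\<^sub>R (\<phi> (g + X t) - \<phi> g) \<in> S) (at 0)"
      unfolding eventually_at using \<delta> main by (auto intro!: exI[of _ \<delta>])
  qed
qed

theorem theorem2p4: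
  fixes add :: "(real \<Rightarrow> 'g::{topological_group_add, t2_space}) \<Rightarrow> (real \<Rightarrow> 'g) \<Rightarrow> (real \<Rightarrow> 'g)"
    and scal :: "real \<Rightarrow> (real \<Rightarrow> 'g) \<Rightarrow> (real \<Rightarrow> 'g)"
    and z :: "real \<Rightarrow> 'g"
  assumes vs: "real_vector_space_on one_param_subgroups add scal z"
    and smult_char: "\<And>t s X. X \<in> one_param_subgroups \<Longrightarrow> scal t X s = X (t * s)"
    and add_char: "\<And>X1 X2. X1 \<in> one_param_subgroups \<Longrightarrow> X2 \<in> one_param_subgroups \<Longrightarrow>
        unif_conv_on_compacts
          (\<lambda>n t. gpow (X1 (t / real n) + X2 (t / real n)) n) (add X1 X2)"
  shows "\<forall>\<phi>::'g \<Rightarrow> 'y::locally_convex_space. \<phi> \<in> LUC1_loc \<longrightarrow>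
           (\<forall>X1\<in>one_param_subgroups. \<forall>X2\<in>one_param_subgroups.
              left_deriv (add X1 X2) \<phi> = (\<lambda>g. left_deriv X1 \<phi> g + left_deriv X2 \<phi> g)) \<and>
           (\<forall>c. \<forall>X\<in>one_param_subgroups.
              left_deriv (scal c X) \<phi> = (\<lambda>g. c *\<^sub>R left_deriv X \<phi> g))"
proof (intro allI impI conjI ballI)
  fix \<phi> :: "'g \<Rightarrow> 'y" assume phi: "\<phi> \<in> LUC1_loc"
  fix X1 X2 :: "real \<Rightarrow> 'g" assume X1: "X1 \<in> one_param_subgroups" and X2: "X2 \<in> one_param_subgroups"
  have XL: "add X1 X2 \<in> one_param_subgroups" using vs X1 X2 by (simp add: real_vector_space_on_def)
  show "left_deriv (add X1 X2) \<phi> = (\<lambda>g. left_deriv X1 \<phi> g + left_deriv X2 \<phi> g)"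
  proof (rule ext)
    fix g
    show "left_deriv (add X1 X2) \<phi> g = left_deriv X1 \<phi> g + left_deriv X2 \<phi> g"
      unfolding left_deriv_def[of "add X1 X2"]
      by (rule tendsto_Lim[OF _ add_part[OF phi X1 X2 XL add_char[OF X1 X2]]]) simp
  qed
next
  fix \<phi> :: "'g \<Rightarrow> 'y" assume phi: "\<phi> \<in> LUC1_loc"
  fix c and X :: "real \<Rightarrow> 'g" assume X: "X \<in> one_param_subgroups"
  show "left_deriv (scal c X) \<phi> = (\<lambda>g. c *\<^sub>R left_deriv X \<phi> g)"
  proof (rule ext)
    fix g
    show "left_deriv (scal c X) \<phi> g = c *\<^sub>R left_deriv X \<phi> g"
      unfolding left_deriv_def[of "scal c X"] smult_char[OF X]
      by (rule tendsto_Lim[OF _ scal_part[OF phi X]]) simp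
  qed
qed

end
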